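(* Let $r,g,a,h,m$ be positive integers with $a\le r$ and $ga+h<gr$, and put $n=rg$. Suppose that $q\ge r$ is a prime power satisfying $q^m\ge \frac{mn}{r}$ and that there is a $q$-ary $[r,r-a,a+1]$ linear code. If (i) $m\ge r$, or (ii) $m<r$ and there exists a $q$-ary $[r,r-m,\ge h+a+1]$ linear code, then there exists an MR $(n,r,h,a)$-LRC over a field of size $\ell=q^{\min\{hm,\frac{nm}{r}\}}$.
   Context: Definition: let $\ell$ be a prime power, $a,g,r,h$ positive integers with $ga+h<gr$, $n=gr$, $k=n-ga-h$. An MR (maximally recoverable) $(n,r,h,a)_\ell$-LRC is an $[n,k]$ linear code over $\mathbb{F}_\ell$ with a parity-check matrix $H\in\mathbb{F}_\ell^{(n-k)\times n}$ of the block form whose first $ga$ rows are block diagonal with diagonal blocks $A_1,\dots,A_g$ (each of size $a\times r$, the $n$ coordinates being split into $g$ consecutive groups of size $r$) and whose last $h$ rows are $(D_1|\cdots|D_g)$ with each $D_i$ of size $h\times r$, such that (i) each $A_i$ generates an $[r,a,r-a+1]_\ell$ MDS code, and (ii) every set of $ag+h$ columns of $H$ consisting of any $a$ columns from each group together with any $h$ further columns is linearly independent over $\mathbb{F}_\ell$. "An MR $(n,r,h,a)$-LRC over a field of size $\ell$" means an MR $(n,r,h,a)_\ell$-LRC. *)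

theory Defs
  imports Complex_Main "HOL-Library.Cardinality" "HOL-Computational_Algebra.Primes"
begin

text \<open>Vectors of length n over a field are functions nat => 'a vanishing outside {..<n}.\<close>

definition vecs :: "nat \<Rightarrow> (nat \<Rightarrow> 'a::field) set" where
  "vecs n = {v. \<forall>i\<ge>n. v i = 0}"

definition hweight :: "nat \<Rightarrow> (nat \<Rightarrow> 'a::field) \<Rightarrow> nat" where
  "hweight n v = card {i. i < n \<and> v i \<noteq> 0}"

definition linear_code :: "nat \<Rightarrow> nat \<Rightarrow> (nat \<Rightarrow> 'a::field) set \<Rightarrow> bool" where
  "linear_code n k C \<longleftrightarrow>
     C \<subseteq> vecs n \<and> (\<lambda>_. 0) \<in> C \<and>
     (\<forall>u\<in>C. \<forall>v\<in>C. (\<lambda>i. u i + v i) \<in> C) \<and>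
     (\<forall>c. \<forall>v\<in>C. (\<lambda>i. c * v i) \<in> C) \<and>
     (\<exists>b :: nat \<Rightarrow> nat \<Rightarrow> 'a.
        (\<forall>t<k. b t \<in> C) \<and>
        (\<forall>c. (\<forall>i. (\<Sum>t<k. c t * b t i) = 0) \<longrightarrow> (\<forall>t<k. c t = 0)) \<and>
        (\<forall>v\<in>C. \<exists>c. \<forall>i. v i = (\<Sum>t<k. c t * b t i)))"

definition min_dist_ge :: "nat \<Rightarrow> (nat \<Rightarrow> 'a::field) set \<Rightarrow> nat \<Rightarrow> bool" where
  "min_dist_ge n C d \<longleftrightarrow> (\<forall>v\<in>C. v \<noteq> (\<lambda>_. 0) \<longrightarrow> hweight n v \<ge> d)"

definition min_dist :: "nat \<Rightarrow> (nat \<Rightarrow> 'a::field) set \<Rightarrow> nat \<Rightarrow> bool" where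
  "min_dist n C d \<longleftrightarrow> min_dist_ge n C d \<and>
     (C \<noteq> {\<lambda>_. 0} \<longrightarrow> (\<exists>v\<in>C. v \<noteq> (\<lambda>_. 0) \<and> hweight n v = d))"

definition row_space :: "nat \<Rightarrow> nat \<Rightarrow> (nat \<Rightarrow> nat \<Rightarrow> 'a::field) \<Rightarrow> (nat \<Rightarrow> 'a) set" where
  "row_space a r M = {v. \<exists>c. \<forall>j. v j = (if j < r then (\<Sum>t<a. c t * M t j) else 0)}"

text \<open>The block parity-check matrix H of size (g*a+h) x (g*r) built from
  A i (a x r, i<g) on the block diagonal in the first g*a rows and
  D i (h x r) in the last h rows. Column j belongs to group j div r, position j mod r.\<close>

definition lrc_H :: "nat \<Rightarrow> nat \<Rightarrow> nat \<Rightarrow> nat \<Rightarrow>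
    (nat \<Rightarrow> nat \<Rightarrow> nat \<Rightarrow> 'a::field) \<Rightarrow> (nat \<Rightarrow> nat \<Rightarrow> nat \<Rightarrow> 'a) \<Rightarrow> nat \<Rightarrow> nat \<Rightarrow> 'a" where
  "lrc_H g r h a A D row j =
     (if row < g * a then
        (if row div a = j div r then A (j div r) (row mod a) (j mod r) else 0)
      else D (j div r) (row - g * a) (j mod r))"

definition cols_indep :: "nat \<Rightarrow> (nat \<Rightarrow> nat \<Rightarrow> 'a::field) \<Rightarrow> nat set \<Rightarrow> bool" where
  "cols_indep m H S \<longleftrightarrow>
     (\<forall>c. (\<forall>row<m. (\<Sum>j\<in>S. c j * H row j) = 0) \<longrightarrow> (\<forall>j\<in>S. c j = 0))"

definition MR_LRC :: "nat \<Rightarrow> nat \<Rightarrow> nat \<Rightarrow> nat \<Rightarrow> (nat \<Rightarrow> 'a::field) set \<Rightarrow> bool" where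
  "MR_LRC n r h a C \<longleftrightarrow>
     (let g = n div r; k = n - g * a - h in
      0 < r \<and> r dvd n \<and> 0 < a \<and> 0 < h \<and> 0 < g \<and> g * a + h < g * r \<and>
      linear_code n k C \<and>
      (\<exists>A D.
         C = {v \<in> vecs n. \<forall>row < g * a + h. (\<Sum>j<n. lrc_H g r h a A D row j * v j) = 0} \<and>
         (\<forall>i<g. linear_code r a (row_space a r (A i)) \<and>
                min_dist r (row_space a r (A i)) (r - a + 1)) \<and>
         (\<forall>S. S \<subseteq> {..<n} \<and> card S = g * a + h \<and>
              (\<forall>i<g. card {j\<in>S. j div r = i} \<ge> a) \<longrightarrow>
              cols_indep (g * a + h) (lrc_H g r h a A D) S)))"

end

theory Submission
  imports Defs "HOL-Number_Theory.Residues" "HOL-Computational_Algebra.Polynomial"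
begin

lemma vand_col:
  fixes \<theta> :: "'b \<Rightarrow> 'a::field"
  assumes fin: "finite T" and inj: "inj_on \<theta> T" and card: "card T \<le> M"
    and eq: "\<forall>t<M. (\<Sum>j\<in>T. x j * \<theta> j ^ t) = 0"
  shows "\<forall>j\<in>T. x j = 0"
proof
  fix j0 assume j0: "j0 \<in> T"
  define p where "p = (\<Prod>j\<in>T-{j0}. [:-\<theta> j, 1:])"
  have "degree p \<le> (\<Sum>j\<in>T-{j0}. degree [:-\<theta> j, 1:])"
    unfolding p_def using degree_prod_sum_le[of "T-{j0}" "\<lambda>j. [:-\<theta> j, 1:]"] fin by (simp add: o_def)
  also have "\<dots> = card (T - {j0})" by simp
  also have "\<dots> < M" using card j0 fin by (metis card_Diff1_less order_less_le_trans)
  finally have deg: "degree p < M" .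
  have "(\<Sum>j\<in>T. x j * poly p (\<theta> j)) = (\<Sum>j\<in>T. \<Sum>i\<le>degree p. coeff p i * (x j * \<theta> j ^ i))"
    by (simp add: poly_altdef sum_distrib_left mult_ac)
  also have "\<dots> = (\<Sum>i\<le>degree p. coeff p i * (\<Sum>j\<in>T. x j * \<theta> j ^ i))"
    by (subst sum.swap) (simp add: sum_distrib_left)
  also have "\<dots> = 0" using deg eq by simp
  finally have s0: "(\<Sum>j\<in>T. x j * poly p (\<theta> j)) = 0" .
  have pv: "poly p (\<theta> j) = (\<Prod>j'\<in>T-{j0}. \<theta> j - \<theta> j')" for j
    unfolding p_def by (simp add: poly_prod)
  have z: "poly p (\<theta> j) = 0" if "j \<in> T" "j \<noteq> j0" for j
    unfolding pv using that fin by (intro prod_zero) auto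
  have nz: "poly p (\<theta> j0) \<noteq> 0"
    unfolding pv using inj j0 fin by (subst prod_zero_iff) (auto simp: inj_on_def)
  have "(\<Sum>j\<in>T. x j * poly p (\<theta> j)) = x j0 * poly p (\<theta> j0)"
    using j0 fin z by (subst sum.remove[of _ j0]) auto
  with s0 nz show "x j0 = 0" by simp
qed

lemma vand_row:
  fixes \<theta> :: "'b \<Rightarrow> 'a::field"
  assumes fin: "finite T" and inj: "inj_on \<theta> T" and card: "a \<le> card T"
    and eq: "\<forall>j\<in>T. (\<Sum>t<a. y t * \<theta> j ^ t) = 0"
  shows "\<forall>t<a. y t = 0"
proof -
  define p where "p = (\<Sum>t<a. monom (y t) t)"
  have pv: "poly p z = (\<Sum>t<a. y t * z ^ t)" for z
    unfolding p_def by (simp add: poly_sum poly_monom)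
  have cf: "coeff p t = y t" if "t < a" for t
    unfolding p_def using that by (simp add: coeff_sum)
  have "p = 0"
  proof (rule ccontr)
    assume p0: "p \<noteq> 0"
    then have a0: "a > 0" unfolding p_def by (cases a) auto
    have "degree p \<le> a - 1"
      unfolding p_def by (rule degree_sum_le) (use a0 in \<open>auto intro: order.trans[OF degree_monom_le]\<close>)
    then have dl: "degree p < card T" using card a0 by linarith
    have "\<theta> ` T \<subseteq> {x. poly p x = 0}" using eq pv by auto
    then have "card (\<theta> ` T) \<le> card {x. poly p x = 0}"
      by (intro card_mono poly_roots_finite p0)
    also have "\<dots> \<le> degree p" by (rule card_poly_roots_bound[OF p0])
    finally show False using dl card_image[OF inj] by simp
  qed
  then show ?thesis using cf by (metis coeff_0)
qed


lemma ff_pow_card: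
  fixes x :: "'a::{finite,field}"
  shows "x ^ card (UNIV :: 'a set) = x"
proof (cases "x = 0")
  case False
  have "x * (\<Prod>y\<in>UNIV-{0}. x * y) = x * x ^ (card (UNIV :: 'a set) - 1) * \<Prod>(UNIV-{0})"
    by (simp add: prod.distrib mult_ac)
  also have "x * x ^ (card (UNIV :: 'a set) - 1) = x ^ Suc (card (UNIV :: 'a set) - 1)"
    by (subst power_Suc) auto
  also have "Suc (card (UNIV :: 'a set) - 1) = card (UNIV :: 'a set)"
    using finite_UNIV_card_ge_0[where ?'a = 'a] by simp
  also have "(\<Prod>y\<in>UNIV-{0}. x * y) = (\<Prod>y\<in>UNIV-{0}. y)"
    by (rule prod.reindex_bij_witness[of _ "\<lambda>y. y / x" "\<lambda>y. x * y"]) (use False in auto)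
  finally show ?thesis
    by simp
qed (use finite_UNIV_card_ge_0[where ?'a = 'a] in auto)

lemma ff_char:
  assumes p: "prime p" and c: "CARD('a::{finite,field}) = p ^ e" and e: "0 < e"
  shows "CHAR('a) = p"
proof -
  have pos: "CHAR('a) > 0" by (rule finite_imp_CHAR_pos) simp
  have pr: "prime CHAR('a)" using prime_CHAR_semidom[OF pos] .
  have "CHAR('a) dvd p ^ e" using CHAR_dvd_CARD[where 'a='a] c by simp
  then have "CHAR('a) dvd p" using pr prime_dvd_power by blast
  then show ?thesis using pr p primes_dvd_imp_eq by blast
qed

definition subfld :: "'a::field set \<Rightarrow> bool" where
  "subfld E \<longleftrightarrow> 0 \<in> E \<and> 1 \<in> E \<and> (\<forall>x\<in>E. \<forall>y\<in>E. x + y \<in> E \<and> x * y \<in> E) \<and>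
     (\<forall>x\<in>E. - x \<in> E \<and> inverse x \<in> E)"

lemma subfld_sum: "subfld E \<Longrightarrow> (\<And>i. i \<in> A \<Longrightarrow> f i \<in> E) \<Longrightarrow> sum f A \<in> E"
  by (induction A rule: infinite_finite_induct) (auto simp: subfld_def)

lemma subfld_power: "subfld E \<Longrightarrow> x \<in> E \<Longrightarrow> x ^ n \<in> E"
  by (induction n) (auto simp: subfld_def)

lemma subfld_mult: "subfld E \<Longrightarrow> x \<in> E \<Longrightarrow> y \<in> E \<Longrightarrow> x * y \<in> E"
  by (auto simp: subfld_def)

lemma subfld_add: "subfld E \<Longrightarrow> x \<in> E \<Longrightarrow> y \<in> E \<Longrightarrow> x + y \<in> E"
  by (auto simp: subfld_def)



lemma subfld_div: "subfld E \<Longrightarrow> x \<in> E \<Longrightarrow> y \<in> E \<Longrightarrow> x / y \<in> E"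
  by (auto simp: subfld_def divide_inverse)

lemma subfld_uminus: "subfld E \<Longrightarrow> x \<in> E \<Longrightarrow> - x \<in> E"
  by (auto simp: subfld_def)

lemma subfld_diff: "subfld E \<Longrightarrow> x \<in> E \<Longrightarrow> y \<in> E \<Longrightarrow> x - y \<in> E"
  by (metis subfld_add subfld_uminus diff_conv_add_uminus)

lemma sf_subfld:
  fixes Q :: nat
  assumes pr: "prime CHAR('a::field)" and Q: "Q = CHAR('a) ^ e"
  shows "subfld {x::'a. x ^ Q = x}"
proof -
  have Qp: "Q > 0" using Q pr prime_gt_0_nat by simp
  have add: "(x + y) ^ Q = x ^ Q + y ^ Q" for x y :: 'a
    using freshmans_dream'[OF pr Q] .
  have neg: "(- x) ^ Q = - (x ^ Q)" for x :: 'a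
  proof -
    have "0 = (x + - x) ^ Q" using Qp by simp
    also have "\<dots> = x ^ Q + (- x) ^ Q" by (rule add)
    finally show ?thesis by (simp add: eq_neg_iff_add_eq_0 add.commute)
  qed
  show ?thesis unfolding subfld_def
    using Qp by (auto simp: add neg power_mult_distrib power_inverse)
qed

lemma frob_sum:
  assumes pr: "prime CHAR('a::field)" and Q: "Q = CHAR('a) ^ e"
  shows "(sum f A :: 'a) ^ Q = (\<Sum>i\<in>A. f i ^ Q)"
  using freshmans_dream_sum'[OF pr Q] .

lemma geom_nat: "(Q - 1) * (\<Sum>u<D. Q ^ u) = Q ^ D - (1::nat)" if "Q \<ge> 1"
proof -
  have "int ((Q - 1) * (\<Sum>u<D. Q ^ u)) = (int Q - 1) * (\<Sum>u<D. int Q ^ u)"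
    using that by (simp add: of_nat_diff)
  also have "\<dots> = int Q ^ D - 1" by (simp add: power_diff_1_eq mult.commute)
  also have "\<dots> = int (Q ^ D - 1)" using that by (simp add: of_nat_diff)
  finally have "int ((Q - 1) * (\<Sum>u<D. Q ^ u)) = int (Q ^ D - 1)" .
  then show ?thesis by (simp only: of_nat_eq_iff)
qed

lemma card_sf:
  assumes pr: "prime CHAR('a::{finite,field})" and Q: "Q = CHAR('a) ^ e" and e: "0 < e"
    and card: "CARD('a) = Q ^ D" and D: "0 < D"
  shows "card {x::'a. x ^ Q = x} = Q"
proof (rule antisym)
  have Q2: "Q \<ge> 2"
  proof -
    have "CHAR('a) ^ 1 \<le> CHAR('a) ^ e" by (rule power_increasing) (use e prime_gt_0_nat[OF pr] in auto)
    then show ?thesis using Q prime_ge_2_nat[OF pr] by simp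
  qed
  define P :: "'a poly" where "P = monom 1 Q - [:0, 1:]"
  have Pv: "poly P x = x ^ Q - x" for x unfolding P_def by (simp add: poly_monom)
  obtain k where Qk: "Q = Suc (Suc k)" using Q2 by (metis add_2_eq_Suc le_Suc_ex)
  have "coeff P Q = 1" unfolding P_def Qk by (simp add: coeff_monom)
  then have P0: "P \<noteq> 0" by auto
  have "degree P \<le> Q" unfolding P_def
    by (rule order.trans[OF degree_diff_le_max]) (use Q2 in \<open>auto simp: degree_monom_eq degree_pCons_eq_if\<close>)
  moreover have "{x::'a. x ^ Q = x} = {x. poly P x = 0}" by (auto simp: Pv)
  ultimately show "card {x::'a. x ^ Q = x} \<le> Q" using card_poly_roots_bound[OF P0] by simp
next
  have Q2: "Q \<ge> 2"
  proof -
    have "CHAR('a) ^ 1 \<le> CHAR('a) ^ e" by (rule power_increasing) (use e prime_gt_0_nat[OF pr] in auto)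
    then show ?thesis using Q prime_ge_2_nat[OF pr] by simp
  qed
  define d where "d = Q - 1"
  define R where "R = (\<Sum>u<D. Q ^ u)"
  have dR: "d * R = Q ^ D - 1" unfolding d_def R_def using geom_nat Q2 by simp
  have d1: "d \<ge> 1" using Q2 d_def by simp
  have R1: "R \<ge> 1" unfolding R_def using D by (subst sum.remove[of _ 0]) auto
  define f :: "'a poly" where "f = (\<Sum>u<R. monom 1 (d * u))"
  have fv: "poly f x = (\<Sum>u<R. (x ^ d) ^ u)" for x
    unfolding f_def by (simp add: poly_sum poly_monom power_mult)
  have "poly f 0 = 1"
    unfolding fv using d1 R1 by (subst sum.remove[of _ 0]) (auto simp: power_0_left)
  then have f0: "f \<noteq> 0" by auto
  have degf: "degree f \<le> d * (R - 1)"
    unfolding f_def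
  proof (rule degree_sum_le)
    fix u assume "u \<in> {..<R}"
    then have "d * u \<le> d * (R - 1)" by (intro mult_le_mono2) auto
    then show "degree (monom (1::'a) (d * u)) \<le> d * (R - 1)"
      by (rule order.trans[OF degree_monom_le])
  qed simp
  have key: "x ^ d = 1 \<or> poly f x = 0" if "x \<noteq> 0" for x :: 'a
  proof -
    have "x ^ (Q ^ D) = x" using ff_pow_card[of x] card by simp
    moreover have "Q ^ D = Suc (d * R)"
    proof -
      have "Q ^ D \<ge> 1" using Q2 by simp
      then show ?thesis using dR by linarith
    qed
    ultimately have "x * (x ^ d) ^ R = x" by (simp add: power_mult)
    then have "(x ^ d) ^ R = 1" using that by simp
    then have "(x ^ d - 1) * poly f x = 0" unfolding fv by (simp add: power_diff_1_eq[symmetric])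
    then show ?thesis by simp
  qed
  have "UNIV - {0} \<subseteq> {x::'a. x ^ d = 1} \<union> {x. poly f x = 0}" using key by auto
  then have "card (UNIV - {0::'a}) \<le> card ({x::'a. x ^ d = 1} \<union> {x. poly f x = 0})"
    by (intro card_mono) auto
  also have "\<dots> \<le> card {x::'a. x ^ d = 1} + card {x. poly f x = 0}" by (rule card_Un_le)
  also have "card {x. poly f x = 0} \<le> d * (R - 1)"
    using card_poly_roots_bound[OF f0] degf by simp
  finally have "Q ^ D - 1 \<le> card {x::'a. x ^ d = 1} + d * (R - 1)"
    using card by (simp add: card_Diff_singleton)
  moreover have "d * (R - 1) = d * R - d" by (simp add: diff_mult_distrib2)
  moreover have "d * R \<ge> d" using R1 by simp
  ultimately have c1: "d \<le> card {x::'a. x ^ d = 1}" using dR by linarith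
  have "insert 0 {x::'a. x ^ d = 1} \<subseteq> {x. x ^ Q = x}"
  proof -
    have Qd: "Q = Suc d" using Q2 d_def by simp
    show ?thesis by (auto simp: Qd)
  qed
  then have "card (insert 0 {x::'a. x ^ d = 1}) \<le> card {x::'a. x ^ Q = x}"
    by (intro card_mono) auto
  moreover have "card (insert 0 {x::'a. x ^ d = 1}) = Suc (card {x::'a. x ^ d = 1})"
    using d1 by (subst card_insert_disjoint) (auto simp: power_0_left)
  ultimately show "Q \<le> card {x::'a. x ^ Q = x}" using c1 d_def Q2 by simp
qed

definition indep :: "'a::field set \<Rightarrow> (nat \<Rightarrow> 'a) \<Rightarrow> nat \<Rightarrow> bool" where
  "indep E b k \<longleftrightarrow> (\<forall>c. (\<forall>t<k. c t \<in> E) \<longrightarrow> (\<Sum>t<k. c t * b t) = 0 \<longrightarrow> (\<forall>t<k. c t = 0))"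

lemma greedy:
  fixes E U :: "'a::field set"
  assumes E: "subfld E" "finite E" and U: "finite U" and cU: "card E ^ N \<le> card U"
  shows "\<exists>b. (\<forall>t<N. b t \<in> U) \<and> indep E b N"
proof -
  have E2: "2 \<le> card E"
  proof -
    have "{0,1} \<subseteq> E" using E by (auto simp: subfld_def)
    then have "card {0::'a,1} \<le> card E" using E by (intro card_mono) auto
    then show ?thesis by simp
  qed
  have "\<forall>k\<le>N. \<exists>b. (\<forall>t<k. b t \<in> U) \<and> indep E b k"
  proof (intro allI)
    fix k show "k \<le> N \<longrightarrow> (\<exists>b. (\<forall>t<k. b t \<in> U) \<and> indep E b k)"
    proof (induction k)
      case 0 show ?case by (auto simp: indep_def)
    next
      case (Suc k)
      show ?case
      proof
        assume kN: "Suc k \<le> N"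
        then obtain b where bU: "\<forall>t<k. b t \<in> U" and bi: "indep E b k" using Suc by auto
        define span where "span = (\<lambda>c. \<Sum>t<k. c t * b t) ` ({..<k} \<rightarrow>\<^sub>E E)"
        have "card span \<le> card ({..<k} \<rightarrow>\<^sub>E E)" unfolding span_def
          by (rule card_image_le) (use E in \<open>auto intro: finite_PiE\<close>)
        also have "\<dots> = card E ^ k" by (simp add: card_PiE)
        also have "\<dots> < card E ^ N" using E2 kN by (intro power_strict_increasing) auto
        finally have "card span < card U" using cU by simp
        have fs: "finite span" unfolding span_def by (intro finite_imageI finite_PiE) (use E in auto)
        have "\<not> U \<subseteq> span" using fs \<open>card span < card U\<close> by (meson card_mono leD)
        then obtain u where uU: "u \<in> U" and us: "u \<notin> span" by auto
        define b' where "b' = b(k := u)"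
        have "indep E b' (Suc k)"
          unfolding indep_def
        proof (rule allI, intro impI)
          fix c assume cE: "\<forall>t<Suc k. c t \<in> E" and s: "(\<Sum>t<Suc k. c t * b' t) = 0"
          have s2: "(\<Sum>t<k. c t * b t) + c k * u = 0"
            using s by (simp add: b'_def)
          have ck: "c k = 0"
          proof (rule ccontr)
            assume ck: "c k \<noteq> 0"
            define c' where "c' = (\<lambda>t\<in>{..<k}. - c t / c k)"
            have "c' \<in> {..<k} \<rightarrow>\<^sub>E E" unfolding c'_def using cE E(1) ck
              by (auto intro!: subfld_div subfld_uminus)
            moreover have "u = (\<Sum>t<k. c' t * b t)"
            proof -
              have "u = - (\<Sum>t<k. c t * b t) / c k" using s2 ck by (simp add: field_simps eq_neg_iff_add_eq_0)
              also have "\<dots> = (\<Sum>t<k. c' t * b t)" unfolding c'_def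
                by (simp add: sum_divide_distrib sum_negf[symmetric])
              finally show ?thesis .
            qed
            ultimately have "u \<in> span" unfolding span_def by blast
            with us show False by simp
          qed
          then have "(\<Sum>t<k. c t * b t) = 0" using s2 by simp
          then have "\<forall>t<k. c t = 0" using bi cE unfolding indep_def by auto
          with ck show "\<forall>t<Suc k. c t = 0" using less_Suc_eq by auto
        qed
        moreover have "\<forall>t<Suc k. b' t \<in> U" using bU uU by (auto simp: b'_def less_Suc_eq)
        ultimately show "\<exists>b. (\<forall>t<Suc k. b t \<in> U) \<and> indep E b (Suc k)" by blast
      qed
    qed
  qed
  then show ?thesis by blast
qed


definition grp :: "nat \<Rightarrow> nat set \<Rightarrow> nat \<Rightarrow> nat set" where
  "grp r T i = {k \<in> T. k div r = i}"

definition meas :: "nat \<Rightarrow> nat \<Rightarrow> nat \<Rightarrow> nat set \<Rightarrow> nat" where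
  "meas r g a T = (\<Sum>i<g. card (grp r T i) - a)"

definition Aok :: "nat \<Rightarrow> nat \<Rightarrow> nat \<Rightarrow> (nat \<Rightarrow> 'a::field) \<Rightarrow> nat set \<Rightarrow> (nat \<Rightarrow> 'a) \<Rightarrow> bool" where
  "Aok r g a \<theta> T c \<longleftrightarrow> (\<forall>i<g. \<forall>s<a. (\<Sum>k\<in>grp r T i. c k * \<theta> (k mod r) ^ s) = 0)"

definition piv :: "(nat \<Rightarrow> 'a::field) \<Rightarrow> (nat \<Rightarrow> 'a) \<Rightarrow> nat \<Rightarrow> nat \<Rightarrow> 'a" where
  "piv \<theta> \<mu> m j = (\<Sum>t<m. \<theta> j ^ t * \<mu> t)"

definition alv :: "(nat \<Rightarrow> 'a::field) \<Rightarrow> (nat \<Rightarrow> 'a) \<Rightarrow> nat \<Rightarrow> nat \<Rightarrow> 'a" where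
  "alv lam \<omega> \<nu> i = (\<Sum>s<\<nu>. lam i ^ s * \<omega> s)"

definition gam :: "nat \<Rightarrow> (nat \<Rightarrow> 'a::field) \<Rightarrow> (nat \<Rightarrow> 'a) \<Rightarrow> nat \<Rightarrow> (nat \<Rightarrow> 'a) \<Rightarrow> (nat \<Rightarrow> 'a) \<Rightarrow> nat \<Rightarrow> nat \<Rightarrow> 'a" where
  "gam r \<theta> \<mu> m lam \<omega> \<nu> k = alv lam \<omega> \<nu> (k div r) * piv \<theta> \<mu> m (k mod r)"

lemma grp_sub: "grp r T i \<subseteq> T" by (auto simp: grp_def)

lemma grp_fin: "finite T \<Longrightarrow> finite (grp r T i)" by (auto simp: grp_def)

lemma grp_card_le: assumes "0 < r" shows "card (grp r T i) \<le> r"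
proof -
  have "grp r T i \<subseteq> {i*r..<i*r+r}"
    using assms by (auto simp: grp_def) (metis div_mult_mod_eq add_less_cancel_left mod_less_divisor mult.commute)+
  then have "card (grp r T i) \<le> card {i*r..<i*r+r}" by (intro card_mono) auto
  then show ?thesis by simp
qed

lemma grp_inj:
  assumes "inj_on \<theta> {..<r}" "0 < r"
  shows "inj_on (\<lambda>k. \<theta> (k mod r)) (grp r T i)"
proof (rule inj_onI)
  fix x y assume x: "x \<in> grp r T i" and y: "y \<in> grp r T i" and e: "\<theta> (x mod r) = \<theta> (y mod r)"
  then have "x mod r = y mod r" using assms by (auto dest: inj_onD)
  moreover have "x div r = y div r" using x y by (auto simp: grp_def)
  ultimately show "x = y" by (metis div_mult_mod_eq)
qed

lemma sum_grp:
  assumes "finite T" "T \<subseteq> {..<g*r}"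
  shows "sum f T = (\<Sum>i<g. \<Sum>k\<in>grp r T i. f k)"
proof -
  have "(\<lambda>k. k div r) ` T \<subseteq> {..<g}"
    using assms(2) by (auto simp: less_mult_imp_div_less)
  from sum.group[OF assms(1) _ this, of f] show ?thesis by (simp add: grp_def)
qed

lemma meas_term: "i < g \<Longrightarrow> card (grp r T i) - a \<le> meas r g a T"
  unfolding meas_def by (rule member_le_sum) auto

lemma grp_zero:
  fixes \<theta> :: "nat \<Rightarrow> 'a::field"
  assumes "finite T" "inj_on \<theta> {..<r}" "0 < r" "card (grp r T i) \<le> M"
    "\<forall>t<M. (\<Sum>k\<in>grp r T i. c k * \<theta> (k mod r) ^ t) = 0"
  shows "\<forall>k\<in>grp r T i. c k = 0"
  by (rule vand_col[of "grp r T i" "\<lambda>k. \<theta> (k mod r)" M c])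
     (use assms grp_fin grp_inj in auto)

lemma lemR:
  fixes K E :: "'l::field set" and \<theta> \<mu> lam \<omega> :: "nat \<Rightarrow> 'l"
  assumes r0: "0 < r" and K: "subfld K" and E: "subfld E" and KE: "K \<subseteq> E"
    and \<theta>K: "\<forall>j<r. \<theta> j \<in> K" and \<theta>inj: "inj_on \<theta> {..<r}"
    and \<mu>E: "\<forall>t<m. \<mu> t \<in> E" and \<mu>i: "indep K \<mu> m"
    and lamE: "\<forall>i<g. lam i \<in> E" and laminj: "inj_on lam {..<g}"
    and \<omega>i: "indep E \<omega> \<nu>" and \<nu>: "\<nu> = min h g"
    and mbig: "min r (a + h) \<le> m"
    and T: "T \<subseteq> {..<g*r}" and mT: "meas r g a T \<le> h"
    and cK: "\<forall>k\<in>T. c k \<in> K" and A: "Aok r g a \<theta> T c"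
    and S: "(\<Sum>k\<in>T. c k * gam r \<theta> \<mu> m lam \<omega> \<nu> k) = 0"
  shows "\<forall>k\<in>T. c k = 0"
proof -
  have fT: "finite T" using T finite_subset by blast
  define Gr where "Gr i = grp r T i" for i
  have z1: "\<forall>k\<in>Gr i. c k = 0" if "i < g" "card (Gr i) \<le> a" for i
    using grp_zero[OF fT \<theta>inj r0, of i a c] A that unfolding Aok_def Gr_def by auto
  define G where "G = {i. i < g \<and> a < card (Gr i)}"
  have Gsub: "G \<subseteq> {..<g}" unfolding G_def by auto
  have fG: "finite G" using Gsub finite_subset by blast
  have "card G = (\<Sum>i\<in>G. 1)" by simp
  also have "\<dots> \<le> (\<Sum>i\<in>G. card (Gr i) - a)" by (rule sum_mono) (auto simp: G_def)
  also have "\<dots> \<le> (\<Sum>i<g. card (Gr i) - a)" by (rule sum_mono2) (use Gsub in auto)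
  also have "\<dots> \<le> h" using mT unfolding meas_def Gr_def by simp
  finally have cGh: "card G \<le> h" .
  have "card G \<le> g" using card_mono[OF _ Gsub] by simp
  with cGh have cG: "card G \<le> \<nu>" using \<nu> by simp
  define w where "w i = (\<Sum>k\<in>Gr i. c k * piv \<theta> \<mu> m (k mod r))" for i
  have cE: "c k \<in> E" if "k \<in> T" for k using cK KE that by auto
  have piE: "piv \<theta> \<mu> m j \<in> E" if "j < r" for j
    unfolding piv_def using \<theta>K \<mu>E KE that
    by (intro subfld_sum[OF E] subfld_mult[OF E] subfld_power[OF E]) auto
  have wE: "w i \<in> E" for i
    unfolding w_def Gr_def using cE piE r0
    by (intro subfld_sum[OF E] subfld_mult[OF E]) (auto simp: grp_def)
  have w0: "w i = 0" if "i < g" "i \<notin> G" for i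
    using z1[of i] that unfolding w_def G_def by auto
  have "(\<Sum>k\<in>T. c k * gam r \<theta> \<mu> m lam \<omega> \<nu> k) = (\<Sum>i<g. \<Sum>k\<in>Gr i. c k * gam r \<theta> \<mu> m lam \<omega> \<nu> k)"
    unfolding Gr_def by (rule sum_grp[OF fT T])
  also have "\<dots> = (\<Sum>i<g. alv lam \<omega> \<nu> i * w i)"
    unfolding w_def gam_def Gr_def grp_def sum_distrib_left
    by (intro sum.cong refl) (auto simp: mult_ac)
  also have "\<dots> = (\<Sum>i\<in>G. alv lam \<omega> \<nu> i * w i)"
    by (rule sum.mono_neutral_right) (use Gsub w0 in auto)
  also have "\<dots> = (\<Sum>s<\<nu>. (\<Sum>i\<in>G. w i * lam i ^ s) * \<omega> s)"
    unfolding alv_def sum_distrib_left sum_distrib_right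
    by (subst sum.swap) (simp add: mult_ac)
  finally have S2: "(\<Sum>s<\<nu>. (\<Sum>i\<in>G. w i * lam i ^ s) * \<omega> s) = 0" using S by simp
  have "\<forall>s<\<nu>. (\<Sum>i\<in>G. w i * lam i ^ s) = 0"
    using \<omega>i S2 unfolding indep_def
    apply (elim allE[of _ "\<lambda>s. \<Sum>i\<in>G. w i * lam i ^ s"])
    using wE lamE Gsub by (auto intro!: subfld_sum[OF E] subfld_mult[OF E] subfld_power[OF E])
  then have wz: "\<forall>i\<in>G. w i = 0"
    using vand_col[OF fG inj_on_subset[OF laminj Gsub] cG] by blast
  have zG: "\<forall>k\<in>Gr i. c k = 0" if iG: "i \<in> G" for i
  proof -
    have ig: "i < g" using iG G_def by auto
    have fGr: "finite (Gr i)" unfolding Gr_def using grp_fin[OF fT] .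
    have "w i = (\<Sum>t<m. (\<Sum>k\<in>Gr i. c k * \<theta> (k mod r) ^ t) * \<mu> t)"
      unfolding w_def piv_def sum_distrib_left sum_distrib_right
      by (subst sum.swap) (simp add: mult_ac)
    then have e0: "(\<Sum>t<m. (\<Sum>k\<in>Gr i. c k * \<theta> (k mod r) ^ t) * \<mu> t) = 0" using wz iG by simp
    have kin: "\<forall>t<m. (\<Sum>k\<in>Gr i. c k * \<theta> (k mod r) ^ t) = 0"
      using \<mu>i e0 unfolding indep_def
      apply (elim allE[of _ "\<lambda>t. \<Sum>k\<in>Gr i. c k * \<theta> (k mod r) ^ t"])
      using cK \<theta>K r0 by (auto intro!: subfld_sum[OF K] subfld_mult[OF K] subfld_power[OF K] simp: Gr_def grp_def)
    have c1: "card (Gr i) \<le> r" unfolding Gr_def using grp_card_le[OF r0] .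
    have "card (Gr i) - a \<le> h" using meas_term[OF ig, of r T a] mT unfolding Gr_def by simp
    then have "card (Gr i) \<le> m" using c1 mbig by linarith
    then show ?thesis using grp_zero[OF fT \<theta>inj r0, of i m c] kin unfolding Gr_def by auto
  qed
  show ?thesis
  proof
    fix k assume k: "k \<in> T"
    define i where "i = k div r"
    have ig: "i < g" using k T unfolding i_def by (auto simp: less_mult_imp_div_less)
    have kG: "k \<in> Gr i" using k unfolding Gr_def grp_def i_def by auto
    show "c k = 0"
    proof (cases "i \<in> G")
      case True then show ?thesis using zG kG by blast
    next
      case False then have "card (Gr i) \<le> a" using ig G_def by auto
      then show ?thesis using z1[OF ig] kG by blast
    qed
  qed
qed


lemma frob_pow:
  fixes f :: "nat \<Rightarrow> 'l::field" and A :: "nat set"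
  assumes "\<And>(f :: nat \<Rightarrow> 'l::field) (A :: nat set). (sum f A) ^ q = (\<Sum>i\<in>A. f i ^ q)"
  shows "(sum f A :: 'l) ^ (q ^ u) = (\<Sum>i\<in>A. f i ^ (q ^ u))"
proof (induction u)
  case 0 then show ?case by simp
next
  case (Suc u)
  have "(sum f A) ^ (q ^ Suc u) = ((sum f A) ^ (q ^ u)) ^ q" by (simp add: power_mult[symmetric] mult.commute)
  also have "\<dots> = (\<Sum>i\<in>A. f i ^ (q ^ u)) ^ q" using Suc by simp
  also have "\<dots> = (\<Sum>i\<in>A. (f i ^ (q ^ u)) ^ q)" by (rule assms)
  also have "\<dots> = (\<Sum>i\<in>A. f i ^ (q ^ Suc u))" by (simp add: power_mult[symmetric] mult.commute)
  finally show ?case .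
qed

lemma K_pow: "(x::'a::monoid_mult) ^ q = x \<Longrightarrow> x ^ (q ^ u) = x"
  by (induction u) (auto simp: power_mult mult.commute)

lemma meas_mono:
  assumes "finite T" "T' \<subseteq> T"
  shows "meas r g a T' \<le> meas r g a T"
  unfolding meas_def
proof (rule sum_mono)
  fix i have "card (grp r T' i) \<le> card (grp r T i)"
    using assms by (intro card_mono grp_fin) (auto simp: grp_def)
  then show "card (grp r T' i) - a \<le> card (grp r T i) - a" by simp
qed

lemma meas_strict:
  assumes fT: "finite T" and k0: "k0 \<in> T" and big: "a < card (grp r T (k0 div r))" and ig: "k0 div r < g"
  shows "meas r g a (T - {k0}) < meas r g a T"
  unfolding meas_def
proof (rule sum_strict_mono_ex1)
  show "\<forall>i\<in>{..<g}. card (grp r (T - {k0}) i) - a \<le> card (grp r T i) - a"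
  proof
    fix i have "card (grp r (T - {k0}) i) \<le> card (grp r T i)"
      using fT by (intro card_mono grp_fin) (auto simp: grp_def)
    then show "card (grp r (T - {k0}) i) - a \<le> card (grp r T i) - a" by simp
  qed
  have "grp r (T - {k0}) (k0 div r) = grp r T (k0 div r) - {k0}" by (auto simp: grp_def)
  then have "card (grp r (T - {k0}) (k0 div r)) = card (grp r T (k0 div r)) - 1"
    using k0 fT by (simp add: card_Diff_singleton grp_fin grp_def)
  then show "\<exists>i\<in>{..<g}. card (grp r (T - {k0}) i) - a < card (grp r T i) - a"
    using big ig by (intro bexI[of _ "k0 div r"]) auto
qed simp

lemma sum_nz:
  assumes "finite T"
  shows "(\<Sum>k\<in>{k\<in>T. c k \<noteq> 0}. c k * f k) = (\<Sum>k\<in>T. (c k :: 'a::field) * f k)"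
  by (rule sum.mono_neutral_left) (use assms in auto)

lemma grp_nz: "grp r {k\<in>T. c k \<noteq> 0} i = {k\<in>grp r T i. c k \<noteq> 0}"
  by (auto simp: grp_def)

lemma Aok_nz:
  assumes "finite T" "Aok r g a \<theta> T c"
  shows "Aok r g a \<theta> {k\<in>T. c k \<noteq> 0} c"
  using assms unfolding Aok_def grp_nz by (auto simp: sum_nz grp_fin)

lemma Aok_scale:
  assumes "Aok r g a \<theta> T c"
  shows "Aok r g a \<theta> T (\<lambda>k. c k / z)"
proof -
  have "(\<Sum>k\<in>grp r T i. c k / z * \<theta> (k mod r) ^ s) = (\<Sum>k\<in>grp r T i. c k * \<theta> (k mod r) ^ s) / z" for i s
    by (simp add: sum_divide_distrib)
  then show ?thesis using assms unfolding Aok_def by simp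
qed


lemma lemM:
  fixes K E :: "'l::field set" and \<theta> \<mu> lam \<omega> :: "nat \<Rightarrow> 'l"
  assumes r0: "0 < r" and K: "subfld K" and E: "subfld E" and KE: "K \<subseteq> E"
    and \<theta>K: "\<forall>j<r. \<theta> j \<in> K" and \<theta>inj: "inj_on \<theta> {..<r}"
    and \<mu>E: "\<forall>t<m. \<mu> t \<in> E" and \<mu>i: "indep K \<mu> m"
    and lamE: "\<forall>i<g. lam i \<in> E" and laminj: "inj_on lam {..<g}"
    and \<omega>i: "indep E \<omega> \<nu>" and \<nu>: "\<nu> = min h g"
    and mbig: "min r (a + h) \<le> m"
    and Kdef: "K = {x. x ^ q = x}" and q0: "0 < q"
    and frob: "\<And>(f :: nat \<Rightarrow> 'l) (A :: nat set). (sum f A) ^ q = (\<Sum>i\<in>A. f i ^ q)"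
  shows "T \<subseteq> {..<g*r} \<Longrightarrow> meas r g a T \<le> h' \<Longrightarrow> meas r g a T \<le> h \<Longrightarrow> Aok r g a \<theta> T c \<Longrightarrow>
     (\<forall>s<h'. (\<Sum>k\<in>T. c k * gam r \<theta> \<mu> m lam \<omega> \<nu> k ^ (q ^ (u + s))) = 0) \<Longrightarrow> \<forall>k\<in>T. c k = 0"
proof (induction h' arbitrary: T c u)
  case 0
  have fT: "finite T" using 0(1) finite_subset by blast
  show ?case
  proof
    fix k assume k: "k \<in> T"
    define i where "i = k div r"
    have ig: "i < g" using k 0(1) unfolding i_def by (auto simp: less_mult_imp_div_less)
    have "card (grp r T i) \<le> a" using meas_term[OF ig, of r T a] 0(2) by simp
    then have "\<forall>k\<in>grp r T i. c k = 0"
      using grp_zero[OF fT \<theta>inj r0, of i a c] 0(4) ig unfolding Aok_def by auto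
    then show "c k = 0" using k unfolding grp_def i_def by auto
  qed
next
  case (Suc h'')
  let ?\<gamma> = "gam r \<theta> \<mu> m lam \<omega> \<nu>"
  have T: "T \<subseteq> {..<g*r}" and mT: "meas r g a T \<le> Suc h''" and mTh: "meas r g a T \<le> h"
    and A: "Aok r g a \<theta> T c"
    and eqs: "\<forall>s<Suc h''. (\<Sum>k\<in>T. c k * ?\<gamma> k ^ (q ^ (u + s))) = 0" using Suc.prems by auto
  have fT: "finite T" using T finite_subset by blast
  show ?case
  proof (rule ccontr)
    assume "\<not> (\<forall>k\<in>T. c k = 0)"
    then obtain k0 where k0T: "k0 \<in> T" and ck0: "c k0 \<noteq> 0" by auto
    define T' where "T' = {k\<in>T. c k \<noteq> 0}"
    have fT': "finite T'" using fT unfolding T'_def by auto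
    have T'T: "T' \<subseteq> T" unfolding T'_def by auto
    have k0: "k0 \<in> T'" using k0T ck0 unfolding T'_def by auto
    have A': "Aok r g a \<theta> T' c" unfolding T'_def by (rule Aok_nz[OF fT A])
    have mT': "meas r g a T' \<le> meas r g a T" by (rule meas_mono[OF fT T'T])
    have eqs': "\<forall>s<Suc h''. (\<Sum>k\<in>T'. c k * ?\<gamma> k ^ (q ^ (u + s))) = 0"
      using eqs unfolding T'_def by (simp add: sum_nz[OF fT])
    define i0 where "i0 = k0 div r"
    have ig: "i0 < g" using k0T T unfolding i0_def by (auto simp: less_mult_imp_div_less)
    have big: "a < card (grp r T' i0)"
    proof (rule ccontr)
      assume "\<not> a < card (grp r T' i0)"
      then have "\<forall>k\<in>grp r T' i0. c k = 0"
        using grp_zero[OF fT' \<theta>inj r0, of i0 a c] A' ig unfolding Aok_def by auto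
      moreover have "k0 \<in> grp r T' i0" using k0 unfolding grp_def i0_def by auto
      ultimately show False using ck0 by auto
    qed
    have mstrict: "meas r g a (T' - {k0}) < meas r g a T'"
      by (rule meas_strict[OF fT' k0]) (use big ig i0_def in auto)
    define ct where "ct k = c k / c k0" for k
    have ct0: "ct k0 = 1" using ck0 unfolding ct_def by simp
    define d where "d k = ct k - ct k ^ q" for k
    have d0: "d k0 = 0" unfolding d_def ct0 by simp
    define T'' where "T'' = T' - {k0}"
    have sumT'': "(\<Sum>k\<in>T''. d k * f k) = (\<Sum>k\<in>T'. d k * f k)" for f
      unfolding T''_def using fT' k0 d0 by (subst sum.remove[of T' k0]) auto
    have grpT'': "grp r T'' i = grp r T' i - {k0}" for i unfolding T''_def grp_def by auto
    have sumgrp: "(\<Sum>k\<in>grp r T'' i. d k * f k) = (\<Sum>k\<in>grp r T' i. d k * f k)" for i f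
    proof (cases "k0 \<in> grp r T' i")
      case True then show ?thesis unfolding grpT'' using grp_fin[OF fT'] d0
        by (subst sum.remove[of "grp r T' i" k0]) auto
    next
      case False then show ?thesis unfolding grpT'' by simp
    qed
    have Act: "Aok r g a \<theta> T' ct" unfolding ct_def by (rule Aok_scale[OF A'])
    have \<theta>q: "\<theta> (k mod r) ^ q = \<theta> (k mod r)" for k using \<theta>K Kdef r0 by auto
    have Ad: "Aok r g a \<theta> T'' d"
      unfolding Aok_def
    proof (intro allI impI)
      fix i s assume i: "i < g" and s: "s < a"
      have z: "(\<Sum>k\<in>grp r T' i. ct k * \<theta> (k mod r) ^ s) = 0" using Act i s unfolding Aok_def by auto
      have "(\<Sum>k\<in>grp r T' i. ct k ^ q * \<theta> (k mod r) ^ s) = (\<Sum>k\<in>grp r T' i. (ct k * \<theta> (k mod r) ^ s) ^ q)"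
        by (simp add: power_mult_distrib power_mult[symmetric] mult.commute[of s q] power_mult[of "\<theta> _" q s] \<theta>q)
      also have "\<dots> = (\<Sum>k\<in>grp r T' i. ct k * \<theta> (k mod r) ^ s) ^ q" by (rule frob[symmetric])
      also have "\<dots> = 0" using z q0 by simp
      finally have z2: "(\<Sum>k\<in>grp r T' i. ct k ^ q * \<theta> (k mod r) ^ s) = 0" .
      have "(\<Sum>k\<in>grp r T'' i. d k * \<theta> (k mod r) ^ s) = (\<Sum>k\<in>grp r T' i. d k * \<theta> (k mod r) ^ s)"
        by (rule sumgrp)
      also have "\<dots> = (\<Sum>k\<in>grp r T' i. ct k * \<theta> (k mod r) ^ s) - (\<Sum>k\<in>grp r T' i. ct k ^ q * \<theta> (k mod r) ^ s)"
        unfolding d_def by (simp add: algebra_simps sum_subtractf)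
      also have "\<dots> = 0" using z z2 by simp
      finally show "(\<Sum>k\<in>grp r T'' i. d k * \<theta> (k mod r) ^ s) = 0" .
    qed
    have eqct: "\<forall>s<Suc h''. (\<Sum>k\<in>T'. ct k * ?\<gamma> k ^ (q ^ (u + s))) = 0"
    proof (intro allI impI)
      fix s assume "s < Suc h''"
      then have "(\<Sum>k\<in>T'. c k * ?\<gamma> k ^ (q ^ (u + s))) = 0" using eqs' by auto
      then show "(\<Sum>k\<in>T'. ct k * ?\<gamma> k ^ (q ^ (u + s))) = 0"
        unfolding ct_def by (simp add: sum_divide_distrib[symmetric])
    qed
    have eqd: "\<forall>s<h''. (\<Sum>k\<in>T''. d k * ?\<gamma> k ^ (q ^ (Suc u + s))) = 0"
    proof (intro allI impI)
      fix s assume s: "s < h''"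
      have e1: "(\<Sum>k\<in>T'. ct k * ?\<gamma> k ^ (q ^ (u + Suc s))) = 0" using eqct s by auto
      have e2: "(\<Sum>k\<in>T'. ct k * ?\<gamma> k ^ (q ^ (u + s))) = 0" using eqct s by auto
      have pw: "?\<gamma> k ^ (q ^ (Suc u + s)) = (?\<gamma> k ^ (q ^ (u + s))) ^ q" for k
        by (simp add: power_mult[symmetric] mult.commute)
      have "(\<Sum>k\<in>T'. ct k ^ q * ?\<gamma> k ^ (q ^ (Suc u + s))) = (\<Sum>k\<in>T'. (ct k * ?\<gamma> k ^ (q ^ (u + s))) ^ q)"
        by (intro sum.cong refl) (simp only: pw power_mult_distrib)
      also have "\<dots> = (\<Sum>k\<in>T'. ct k * ?\<gamma> k ^ (q ^ (u + s))) ^ q" by (rule frob[symmetric])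
      also have "\<dots> = 0" using e2 q0 by simp
      finally have z2: "(\<Sum>k\<in>T'. ct k ^ q * ?\<gamma> k ^ (q ^ (Suc u + s))) = 0" .
      have "(\<Sum>k\<in>T''. d k * ?\<gamma> k ^ (q ^ (Suc u + s))) = (\<Sum>k\<in>T'. d k * ?\<gamma> k ^ (q ^ (Suc u + s)))"
        by (rule sumT'')
      also have "\<dots> = (\<Sum>k\<in>T'. ct k * ?\<gamma> k ^ (q ^ (u + Suc s))) - (\<Sum>k\<in>T'. ct k ^ q * ?\<gamma> k ^ (q ^ (Suc u + s)))"
        unfolding d_def by (simp add: algebra_simps sum_subtractf)
      also have "\<dots> = 0" using e1 z2 by simp
      finally show "(\<Sum>k\<in>T''. d k * ?\<gamma> k ^ (q ^ (Suc u + s))) = 0" .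
    qed
    have T''sub: "T'' \<subseteq> {..<g*r}" using T T'T unfolding T''_def by auto
    have mT'': "meas r g a T'' \<le> h''" using mstrict mT' mT unfolding T''_def by linarith
    have mT''h: "meas r g a T'' \<le> h" using mstrict mT' mTh unfolding T''_def by linarith
    have dz: "\<forall>k\<in>T''. d k = 0" by (rule Suc.IH[OF T''sub mT'' mT''h Ad eqd])
    have ctK: "\<forall>k\<in>T'. ct k \<in> K"
    proof
      fix k assume k: "k \<in> T'"
      show "ct k \<in> K"
      proof (cases "k = k0")
        case True then show ?thesis using ct0 Kdef by simp
      next
        case False then have "d k = 0" using dz k unfolding T''_def by auto
        then show ?thesis unfolding d_def Kdef by simp
      qed
    qed
    have "(\<Sum>k\<in>T'. ct k * ?\<gamma> k) ^ (q ^ u) = (\<Sum>k\<in>T'. (ct k * ?\<gamma> k) ^ (q ^ u))"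
      by (rule frob_pow[OF frob])
    also have "\<dots> = (\<Sum>k\<in>T'. ct k * ?\<gamma> k ^ (q ^ u))"
      by (intro sum.cong refl) (use ctK Kdef K_pow in \<open>auto simp: power_mult_distrib\<close>)
    also have "\<dots> = 0" using eqct by auto
    finally have S0: "(\<Sum>k\<in>T'. ct k * ?\<gamma> k) = 0" by simp
    have "\<forall>k\<in>T'. ct k = 0"
      by (rule lemR[OF r0 K E KE \<theta>K \<theta>inj \<mu>E \<mu>i lamE laminj \<omega>i \<nu> mbig _ _ ctK Act S0])
         (use T T'T mT' mTh in auto)
    then show False using ct0 k0 by auto
  qed
qed


lemma poly_lt:
  fixes p :: "'a::field poly"
  assumes "degree p < a"
  shows "poly p x = (\<Sum>t<a. coeff p t * x ^ t)"
proof -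
  have "poly p x = (\<Sum>t\<le>degree p. coeff p t * x ^ t)" by (rule poly_altdef)
  also have "\<dots> = (\<Sum>t<a. coeff p t * x ^ t)"
    by (rule sum.mono_neutral_left) (use assms in \<open>auto simp: coeff_eq_0\<close>)
  finally show ?thesis .
qed

lemma sum_delta_mult:
  assumes "finite A"
  shows "(\<Sum>t'\<in>A. (if t' = t then 1 else 0) * (f t' :: 'a::field)) = (if t \<in> A then f t else 0)"
proof -
  have "(\<Sum>t'\<in>A. (if t' = t then 1 else 0) * f t') = (\<Sum>t'\<in>A. if t' = t then f t else 0)"
    by (rule sum.cong) auto
  also have "\<dots> = (if t \<in> A then f t else 0)" using assms by simp
  finally show ?thesis .
qed

lemma rs_code:
  fixes \<theta> :: "nat \<Rightarrow> 'a::field"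
  assumes inj: "inj_on \<theta> {..<r}" and a0: "0 < a" and ar: "a \<le> r"
  shows "linear_code r a (row_space a r (\<lambda>s j. \<theta> j ^ s)) \<and> min_dist r (row_space a r (\<lambda>s j. \<theta> j ^ s)) (r - a + 1)"
proof -
  let ?C = "row_space a r (\<lambda>s j. \<theta> j ^ s)"
  have mem: "v \<in> ?C \<longleftrightarrow> (\<exists>c. \<forall>j. v j = (if j < r then (\<Sum>t<a. c t * \<theta> j ^ t) else 0))" for v
    unfolding row_space_def by simp
  define b where "b t = (\<lambda>j. if j < r then \<theta> j ^ t else (0::'a))" for t
  have lc: "linear_code r a ?C"
    unfolding linear_code_def
  proof (intro conjI)
    show "?C \<subseteq> vecs r" by (auto simp: vecs_def mem)
    show "(\<lambda>_. 0) \<in> ?C" unfolding mem by (intro exI[of _ "\<lambda>_. 0"]) auto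
    show "\<forall>u\<in>?C. \<forall>v\<in>?C. (\<lambda>i. u i + v i) \<in> ?C"
    proof (intro ballI)
      fix u v assume "u \<in> ?C" "v \<in> ?C"
      then obtain cu cv where cu: "\<forall>j. u j = (if j < r then (\<Sum>t<a. cu t * \<theta> j ^ t) else 0)"
        and cv: "\<forall>j. v j = (if j < r then (\<Sum>t<a. cv t * \<theta> j ^ t) else 0)" unfolding mem by blast
      show "(\<lambda>i. u i + v i) \<in> ?C" unfolding mem
        by (intro exI[of _ "\<lambda>t. cu t + cv t"]) (auto simp: cu cv algebra_simps sum.distrib)
    qed
    show "\<forall>c. \<forall>v\<in>?C. (\<lambda>i. c * v i) \<in> ?C"
    proof (intro allI ballI)
      fix c v assume "v \<in> ?C"
      then obtain cv where cv: "\<forall>j. v j = (if j < r then (\<Sum>t<a. cv t * \<theta> j ^ t) else 0)" unfolding mem by blast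
      show "(\<lambda>i. c * v i) \<in> ?C" unfolding mem
        by (intro exI[of _ "\<lambda>t. c * cv t"]) (auto simp: cv sum_distrib_left mult_ac)
    qed
    show "\<exists>b. (\<forall>t<a. b t \<in> ?C) \<and> (\<forall>c. (\<forall>i. (\<Sum>t<a. c t * b t i) = 0) \<longrightarrow> (\<forall>t<a. c t = 0)) \<and>
        (\<forall>v\<in>?C. \<exists>c. \<forall>i. v i = (\<Sum>t<a. c t * b t i))"
    proof (intro exI[of _ b] conjI)
      show "\<forall>t<a. b t \<in> ?C"
      proof (intro allI impI)
        fix t assume t: "t < a"
        show "b t \<in> ?C" unfolding mem
          by (intro exI[of _ "\<lambda>t'. if t' = t then 1 else 0"]) (use t in \<open>auto simp: b_def sum_delta_mult\<close>)
      qed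
      show "\<forall>c. (\<forall>i. (\<Sum>t<a. c t * b t i) = 0) \<longrightarrow> (\<forall>t<a. c t = 0)"
      proof (rule allI, rule impI)
        fix c assume h: "\<forall>i. (\<Sum>t<a. c t * b t i) = 0"
        have "\<forall>j\<in>{..<r}. (\<Sum>t<a. c t * \<theta> j ^ t) = 0"
        proof
          fix j assume j: "j \<in> {..<r}"
          show "(\<Sum>t<a. c t * \<theta> j ^ t) = 0" using spec[OF h, of j] j by (simp add: b_def)
        qed
        then show "\<forall>t<a. c t = 0" using vand_row[OF _ inj, of a c] ar by auto
      qed
      show "\<forall>v\<in>?C. \<exists>c. \<forall>i. v i = (\<Sum>t<a. c t * b t i)"
      proof
        fix v assume "v \<in> ?C"
        then obtain cv where cv: "\<forall>j. v j = (if j < r then (\<Sum>t<a. cv t * \<theta> j ^ t) else 0)" unfolding mem by blast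
        show "\<exists>c. \<forall>i. v i = (\<Sum>t<a. c t * b t i)"
          by (intro exI[of _ cv]) (auto simp: cv b_def)
      qed
    qed
  qed
  have mdg: "min_dist_ge r ?C (r - a + 1)"
    unfolding min_dist_ge_def
  proof (intro ballI impI)
    fix v assume v: "v \<in> ?C" and vnz: "v \<noteq> (\<lambda>_. 0)"
    then obtain cv where cv: "\<forall>j. v j = (if j < r then (\<Sum>t<a. cv t * \<theta> j ^ t) else 0)" unfolding mem by blast
    define p where "p = (\<Sum>t<a. monom (cv t) t)"
    have pv: "poly p z = (\<Sum>t<a. cv t * z ^ t)" for z
      unfolding p_def by (simp add: poly_sum poly_monom)
    have vj: "v j = (if j < r then poly p (\<theta> j) else 0)" for j using cv pv by simp
    have p0: "p \<noteq> 0"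
    proof
      assume "p = 0"
      then have "v = (\<lambda>_. 0)" using vj by (auto simp: fun_eq_iff)
      with vnz show False by simp
    qed
    have "degree p \<le> a - 1"
      unfolding p_def by (rule degree_sum_le) (use a0 in \<open>auto intro: order.trans[OF degree_monom_le]\<close>)
    define Z where "Z = {j. j < r \<and> v j = 0}"
    have "\<theta> ` Z \<subseteq> {x. poly p x = 0}" unfolding Z_def using vj by auto
    then have "card (\<theta> ` Z) \<le> card {x. poly p x = 0}" by (intro card_mono poly_roots_finite p0)
    also have "\<dots> \<le> degree p" by (rule card_poly_roots_bound[OF p0])
    also have "card (\<theta> ` Z) = card Z" by (rule card_image) (rule inj_on_subset[OF inj], auto simp: Z_def)
    finally have cZ: "card Z \<le> a - 1" using \<open>degree p \<le> a - 1\<close> by simp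
    have "{i. i < r \<and> v i \<noteq> 0} = {..<r} - Z" unfolding Z_def by auto
    moreover have "Z \<subseteq> {..<r}" unfolding Z_def by auto
    moreover have "finite Z" unfolding Z_def by auto
    ultimately have "hweight r v = r - card Z" unfolding hweight_def
      by (simp add: card_Diff_subset)
    then show "r - a + 1 \<le> hweight r v" using cZ a0 ar by linarith
  qed
  have ex: "\<exists>v\<in>?C. v \<noteq> (\<lambda>_. 0) \<and> hweight r v = r - a + 1"
  proof -
    define p0 where "p0 = (\<Prod>j<a-1. [:-\<theta> j, 1:])"
    have "degree p0 \<le> (\<Sum>j<a-1. degree [:-\<theta> j, 1:])"
      unfolding p0_def using degree_prod_sum_le[of "{..<a-1}" "\<lambda>j. [:-\<theta> j, 1:]"] by (simp add: o_def)
    then have dp: "degree p0 < a" using a0 by simp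
    define v where "v j = (if j < r then poly p0 (\<theta> j) else 0)" for j
    have vC: "v \<in> ?C"
    proof -
      have "\<forall>j. v j = (if j < r then (\<Sum>t<a. coeff p0 t * \<theta> j ^ t) else 0)"
        using poly_lt[OF dp] by (simp add: v_def)
      then show ?thesis unfolding mem by (rule exI[of _ "coeff p0"])
    qed
    have pv: "poly p0 (\<theta> j) = (\<Prod>j'<a-1. \<theta> j - \<theta> j')" for j unfolding p0_def by (simp add: poly_prod)
    have pz: "poly p0 (\<theta> j) = 0 \<longleftrightarrow> j < a - 1" if jr: "j < r" for j
    proof
      assume "poly p0 (\<theta> j) = 0"
      then have "(\<Prod>j'<a-1. \<theta> j - \<theta> j') = 0" by (simp only: pv)
      then obtain j' where j': "j' < a - 1" "\<theta> j - \<theta> j' = 0"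
        using prod_zero_iff[of "{..<a-1}" "\<lambda>j'. \<theta> j - \<theta> j'"] by auto
      then have "j' < r" using ar by linarith
      then have "j = j'" using inj j' jr unfolding inj_on_def by auto
      then show "j < a - 1" using j' by simp
    next
      assume "j < a - 1"
      then have "(\<Prod>j'<a-1. \<theta> j - \<theta> j') = 0"
        by (intro prod_zero) auto
      then show "poly p0 (\<theta> j) = 0" by (simp only: pv)
    qed
    have vz: "v j \<noteq> 0 \<longleftrightarrow> a - 1 \<le> j \<and> j < r" for j
    proof (cases "j < r")
      case True
      then have "v j = poly p0 (\<theta> j)" unfolding v_def by simp
      then show ?thesis using pz[OF True] True by auto
    next
      case False
      then have "v j = 0" unfolding v_def by simp
      then show ?thesis using False by simp
    qed
    have "{i. i < r \<and> v i \<noteq> 0} = {i. a - 1 \<le> i \<and> i < r}" using vz by blast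
    also have "\<dots> = {a-1..<r}" by auto
    finally have "{i. i < r \<and> v i \<noteq> 0} = {a-1..<r}" .
    then have hw: "hweight r v = r - a + 1" unfolding hweight_def using a0 ar by simp
    have "v (a - 1) \<noteq> 0" using vz a0 ar by simp
    then have "v \<noteq> (\<lambda>_. 0)" by auto
    then show ?thesis using vC hw by (intro bexI[of _ v]) simp_all
  qed
  show ?thesis using lc mdg ex unfolding min_dist_def by blast
qed


lemma lc_comb:
  fixes K :: nat
  assumes z: "(\<lambda>_. 0) \<in> C" and ad: "\<forall>u\<in>C. \<forall>v\<in>C. (\<lambda>i. u i + v i) \<in> C"
    and sc: "\<forall>c. \<forall>v\<in>C. (\<lambda>i. c * v i) \<in> C" and bC: "\<forall>t<K. b t \<in> C"
  shows "(\<lambda>i. \<Sum>t<K. c t * b t i) \<in> (C :: (nat \<Rightarrow> 'a::field) set)"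
  using bC
proof (induction K)
  case 0 then show ?case using z by simp
next
  case (Suc K)
  have h1: "(\<lambda>i. \<Sum>t<K. c t * b t i) \<in> C" using Suc by auto
  have h2: "(\<lambda>i. c K * b K i) \<in> C" using sc Suc.prems by auto
  have "(\<lambda>i. (\<lambda>i. \<Sum>t<K. c t * b t i) i + (\<lambda>i. c K * b K i) i) \<in> C"
    by (rule ad[rule_format, OF h1 h2])
  then show ?case by simp
qed

lemma card_field_ge2: "2 \<le> CARD('a::{finite,field})"
proof -
  have "card {0::'a, 1} \<le> CARD('a)" by (rule card_mono) auto
  then show ?thesis by simp
qed

lemma singleton:
  fixes C :: "(nat \<Rightarrow> 'q::{finite,field}) set"
  assumes lc: "linear_code r k C" and md: "min_dist_ge r C d" and k0: "0 < k" and kr: "k \<le> r"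
  shows "d \<le> r - k + 1"
proof -
  from lc obtain b where bC: "\<forall>t<k. b t \<in> C"
    and bi: "\<forall>c. (\<forall>i. (\<Sum>t<k. c t * b t i) = 0) \<longrightarrow> (\<forall>t<k. c t = 0)"
    and sub: "C \<subseteq> vecs r" and z: "(\<lambda>_. 0) \<in> C" and ad: "\<forall>u\<in>C. \<forall>v\<in>C. (\<lambda>i. u i + v i) \<in> C"
    and sc: "\<forall>c. \<forall>v\<in>C. (\<lambda>i. c * v i) \<in> C"
    unfolding linear_code_def by blast
  define Dom where "Dom = ({..<k} \<rightarrow>\<^sub>E (UNIV :: 'q set))"
  define Cod where "Cod = ({..<k-1} \<rightarrow>\<^sub>E (UNIV :: 'q set))"
  define \<Phi> where "\<Phi> c = (\<lambda>j\<in>{..<k-1}. \<Sum>t<k. c t * b t j)" for c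
  have img: "\<Phi> ` Dom \<subseteq> Cod" unfolding \<Phi>_def Cod_def by (intro image_subsetI) (simp add: PiE_iff)
  have fC: "finite Cod" unfolding Cod_def by (intro finite_PiE) auto
  have "card Cod < card Dom"
  proof -
    have "card Cod = CARD('q) ^ (k - 1)" unfolding Cod_def by (simp add: card_PiE)
    also have "\<dots> < CARD('q) ^ k" using card_field_ge2[where 'a='q] k0 by (intro power_strict_increasing) auto
    also have "\<dots> = card Dom" unfolding Dom_def by (simp add: card_PiE)
    finally show ?thesis .
  qed
  then have "\<not> inj_on \<Phi> Dom" using card_inj_on_le[OF _ img fC] by linarith
  then obtain c1 c2 where c1: "c1 \<in> Dom" and c2: "c2 \<in> Dom" and ne: "c1 \<noteq> c2" and eq: "\<Phi> c1 = \<Phi> c2"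
    unfolding inj_on_def by blast
  define c where "c t = c1 t - c2 t" for t
  have "\<exists>t<k. c t \<noteq> 0"
  proof (rule ccontr)
    assume "\<not> (\<exists>t<k. c t \<noteq> 0)"
    then have "c1 = c2" using c1 c2 unfolding Dom_def c_def by (intro PiE_ext[of c1 "{..<k}" "\<lambda>_. UNIV"]) auto
    with ne show False by simp
  qed
  then obtain t0 where t0: "t0 < k" "c t0 \<noteq> 0" by blast
  define v where "v i = (\<Sum>t<k. c t * b t i)" for i
  have vC: "v \<in> C" unfolding v_def by (rule lc_comb[OF z ad sc bC])
  have vnz: "v \<noteq> (\<lambda>_. 0)"
  proof
    assume "v = (\<lambda>_. 0)"
    then have "\<forall>i. (\<Sum>t<k. c t * b t i) = 0" unfolding v_def by (metis)
    then show False using bi t0 by blast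
  qed
  have v0: "v j = 0" if "j < k - 1" for j
  proof -
    have "\<Phi> c1 j = \<Phi> c2 j" using eq by simp
    then have "(\<Sum>t<k. c1 t * b t j) = (\<Sum>t<k. c2 t * b t j)" using that unfolding \<Phi>_def by simp
    then show ?thesis unfolding v_def c_def by (simp add: algebra_simps sum_subtractf)
  qed
  have v1: "v j = 0" if "r \<le> j" for j using vC sub that unfolding vecs_def by auto
  have "{i. i < r \<and> v i \<noteq> 0} \<subseteq> {k-1..<r}" using v0 by (auto simp: not_less[symmetric])
  then have "hweight r v \<le> card {k-1..<r}" unfolding hweight_def by (intro card_mono) auto
  also have "\<dots> = r - k + 1" using k0 kr by simp
  finally show ?thesis using md vC vnz unfolding min_dist_ge_def by fastforce
qed

lemma exS0:
  assumes r0: "0 < r" and ar: "a \<le> r" and gh: "g * a + h < g * r"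
  shows "\<exists>S. S \<subseteq> {..<g*r} \<and> card S = g * a + h \<and> (\<forall>i<g. a \<le> card {j\<in>S. j div r = i})"
proof -
  define f where "f = (\<lambda>(i, s). i * r + s)"
  have fdiv: "(i * r + s) div r = i" and fmod: "(i * r + s) mod r = s" if "s < r" for i s
    using that r0 by auto
  define B where "B = {j. j < g * r \<and> j mod r < a}"
  have Bim: "B = f ` ({..<g} \<times> {..<a})"
  proof (intro Set.set_eqI iffI)
    fix j assume "j \<in> B"
    then have j: "j < g * r" "j mod r < a" unfolding B_def by auto
    have "j div r < g" using j(1) by (simp add: less_mult_imp_div_less)
    moreover have "j = f (j div r, j mod r)" unfolding f_def by simp
    ultimately show "j \<in> f ` ({..<g} \<times> {..<a})" using j(2) by blast
  next
    fix j assume "j \<in> f ` ({..<g} \<times> {..<a})"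
    then obtain i s where isd: "i < g" "s < a" "j = i * r + s" unfolding f_def by auto
    have sr: "s < r" using isd ar by simp
    have "i * r + s < i * r + r" using sr by simp
    also have "\<dots> = (i + 1) * r" by simp
    also have "\<dots> \<le> g * r" using isd(1) by (intro mult_right_mono) auto
    finally show "j \<in> B" unfolding B_def using isd fmod[OF sr] by auto
  qed
  have finj: "inj_on f ({..<g} \<times> {..<a})"
  proof (rule inj_onI)
    fix x y assume x: "x \<in> {..<g} \<times> {..<a}" and y: "y \<in> {..<g} \<times> {..<a}" and e: "f x = f y"
    obtain i s where xi: "x = (i, s)" and s: "s < r" using x ar by force
    obtain i' s' where yi: "y = (i', s')" and s': "s' < r" using y ar by force
    have "i = i'" using fdiv[OF s, of i] fdiv[OF s', of i'] e xi yi unfolding f_def by simp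
    moreover have "s = s'"
    proof -
      have "i * r + s = i' * r + s'" using e xi yi unfolding f_def by simp
      then have "(i * r + s) mod r = (i' * r + s') mod r" by simp
      then show ?thesis using fmod[OF s, of i] fmod[OF s', of i'] by simp
    qed
    ultimately show "x = y" using xi yi by simp
  qed
  have cB: "card B = g * a" unfolding Bim by (simp add: card_image[OF finj] card_cartesian_product)
  define R where "R = {..<g*r} - B"
  have BS: "B \<subseteq> {..<g*r}" unfolding B_def by auto
  have cR: "card R = g * r - g * a" unfolding R_def using BS cB by (simp add: card_Diff_subset finite_subset)
  then have "h \<le> card R" using gh by simp
  then obtain T where T: "T \<subseteq> R" "card T = h" "finite T" by (rule obtain_subset_with_card_n)
  define S where "S = B \<union> T"
  have "S \<subseteq> {..<g*r}" unfolding S_def using BS T R_def by auto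
  moreover have "card S = g * a + h"
  proof -
    have "B \<inter> T = {}" using T R_def by auto
    then show ?thesis unfolding S_def using cB T BS by (simp add: card_Un_disjoint finite_subset)
  qed
  moreover have "a \<le> card {j\<in>S. j div r = i}" if ig: "i < g" for i
  proof -
    have "(\<lambda>s. i * r + s) ` {..<a} \<subseteq> {j\<in>S. j div r = i}"
    proof
      fix j assume "j \<in> (\<lambda>s. i * r + s) ` {..<a}"
      then obtain s where s: "s < a" "j = i * r + s" by auto
      then have "j = f (i, s)" unfolding f_def by simp
      then have "j \<in> B" unfolding Bim using s ig by blast
      moreover have "j div r = i" using s ar fdiv by simp
      ultimately show "j \<in> {j\<in>S. j div r = i}" unfolding S_def by auto
    qed
    moreover have "finite {j\<in>S. j div r = i}"
    proof (rule finite_subset)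
      show "{j\<in>S. j div r = i} \<subseteq> {..<g*r}" using \<open>S \<subseteq> {..<g*r}\<close> by auto
    qed simp
    ultimately have "card ((\<lambda>s. i * r + s) ` {..<a}) \<le> card {j\<in>S. j div r = i}" by (rule card_mono[rotated])
    moreover have "card ((\<lambda>s. i * r + s) ` {..<a}) = a" by (simp add: card_image inj_on_def)
    ultimately show ?thesis by simp
  qed
  ultimately show ?thesis by blast
qed


lemma sum_delta_mult2:
  assumes "finite A"
  shows "(\<Sum>t'\<in>A. (f t' :: 'a::field) * (if t' = t then 1 else 0)) = (if t \<in> A then f t else 0)"
proof -
  have "(\<Sum>t'\<in>A. f t' * (if t' = t then 1 else 0)) = (\<Sum>t'\<in>A. if t' = t then f t else 0)"
    by (rule sum.cong) auto
  also have "\<dots> = (if t \<in> A then f t else 0)" using assms by simp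
  finally show ?thesis .
qed

lemma null_code:
  fixes H :: "nat \<Rightarrow> nat \<Rightarrow> 'a::{finite,field}"
  assumes S0: "S0 \<subseteq> {..<n}" and cS: "card S0 = N" and ci: "cols_indep N H S0"
  shows "linear_code n (n - N) {v \<in> vecs n. \<forall>row<N. (\<Sum>j<n. H row j * v j) = 0}"
proof -
  let ?C = "{v \<in> vecs n. \<forall>row<N. (\<Sum>j<n. H row j * v j) = 0}"
  have fS0: "finite S0" using S0 finite_subset by blast
  have ciD: "\<forall>j\<in>S0. d j = 0" if "\<forall>row<N. (\<Sum>j\<in>S0. d j * H row j) = 0" for d
    using ci that unfolding cols_indep_def by blast
  define Dom where "Dom = (S0 \<rightarrow>\<^sub>E (UNIV :: 'a set))"
  define Cod where "Cod = ({..<N} \<rightarrow>\<^sub>E (UNIV :: 'a set))"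
  define \<Phi> where "\<Phi> x = (\<lambda>row\<in>{..<N}. \<Sum>j\<in>S0. x j * H row j)" for x
  have img: "\<Phi> ` Dom \<subseteq> Cod" unfolding \<Phi>_def Cod_def by (intro image_subsetI) (simp add: PiE_iff)
  have inj: "inj_on \<Phi> Dom"
  proof (rule inj_onI)
    fix x y assume x: "x \<in> Dom" and y: "y \<in> Dom" and e: "\<Phi> x = \<Phi> y"
    have "\<forall>row<N. (\<Sum>j\<in>S0. (x j - y j) * H row j) = 0"
    proof (intro allI impI)
      fix row assume row: "row < N"
      have "\<Phi> x row = \<Phi> y row" using e by simp
      then have "(\<Sum>j\<in>S0. x j * H row j) = (\<Sum>j\<in>S0. y j * H row j)" using row unfolding \<Phi>_def by simp
      then show "(\<Sum>j\<in>S0. (x j - y j) * H row j) = 0" by (simp add: algebra_simps sum_subtractf)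
    qed
    then have "\<forall>j\<in>S0. x j - y j = 0" by (rule ciD)
    then show "x = y" using x y unfolding Dom_def by (intro PiE_ext[of x S0 "\<lambda>_. UNIV"]) auto
  qed
  have fCod: "finite Cod" unfolding Cod_def by (intro finite_PiE) auto
  have "card (\<Phi> ` Dom) = card Cod"
    using card_image[OF inj] cS unfolding Dom_def Cod_def by (simp add: card_PiE fS0)
  then have surj: "\<Phi> ` Dom = Cod" using card_subset_eq[OF fCod img] by simp
  define F0 where "F0 = {..<n} - S0"
  have cF0: "card F0 = n - N" unfolding F0_def using S0 cS fS0 by (simp add: card_Diff_subset)
  obtain e where e: "bij_betw e {0..<card F0} F0" using ex_bij_betw_nat_finite[of F0] unfolding F0_def by auto
  then have e': "bij_betw e {..<n-N} F0" using cF0 by (simp add: atLeast0LessThan)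
  have eF: "e t \<in> F0" if "t < n - N" for t using e' that by (auto simp: bij_betw_def)
  have einj: "e t = e t' \<longleftrightarrow> t = t'" if "t < n - N" "t' < n - N" for t t'
    using e' that by (auto simp: bij_betw_def inj_on_def)
  have esurj: "\<exists>t<n-N. j = e t" if "j \<in> F0" for j
    using e' that by (auto simp: bij_betw_def)
  define y where "y f = (\<lambda>row\<in>{..<N}. - H row f)" for f
  have yC: "y f \<in> Cod" for f unfolding y_def Cod_def by (simp add: PiE_iff)
  have "\<exists>x\<in>Dom. \<Phi> x = y f" for f
  proof -
    have "y f \<in> \<Phi> ` Dom" using surj yC by simp
    then show ?thesis by (metis imageE)
  qed
  then obtain xs where xs: "\<And>f. xs f \<in> Dom \<and> \<Phi> (xs f) = y f" by metis
  have xsr: "(\<Sum>j\<in>S0. xs f j * H row j) = - H row f" if "row < N" for f row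
  proof -
    have "\<Phi> (xs f) row = y f row" using xs by simp
    then show ?thesis using that unfolding \<Phi>_def y_def by simp
  qed
  define b where "b t = (\<lambda>j. if j = e t then 1 else if j \<in> S0 then xs (e t) j else 0)" for t
  have bee: "b t (e t0) = (if t = t0 then 1 else 0)" if "t < n - N" "t0 < n - N" for t t0
    using eF[OF that(2)] einj[OF that] unfolding b_def F0_def by auto
  have bC: "b t \<in> ?C" if t: "t < n - N" for t
  proof -
    define f where "f = e t"
    have fF: "f \<in> F0" using eF[OF t] f_def by simp
    have bv: "b t \<in> vecs n" using fF unfolding vecs_def b_def f_def[symmetric] F0_def using S0 by auto
    have "(\<Sum>j<n. H row j * b t j) = 0" if row: "row < N" for row
    proof -
      have sub: "insert f S0 \<subseteq> {..<n}" using fF S0 F0_def by auto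
      have "(\<Sum>j<n. H row j * b t j) = (\<Sum>j\<in>insert f S0. H row j * b t j)"
        by (rule sum.mono_neutral_right) (use sub in \<open>auto simp: b_def f_def[symmetric]\<close>)
      also have "\<dots> = H row f * b t f + (\<Sum>j\<in>S0. H row j * b t j)"
        using fF fS0 unfolding F0_def by (subst sum.insert) auto
      also have "(\<Sum>j\<in>S0. H row j * b t j) = (\<Sum>j\<in>S0. xs f j * H row j)"
        using fF unfolding F0_def b_def f_def[symmetric] by (intro sum.cong refl) (auto simp: mult.commute)
      also have "\<dots> = - H row f" by (rule xsr[OF row])
      also have "b t f = 1" unfolding b_def f_def by simp
      finally show ?thesis by simp
    qed
    then show ?thesis using bv by blast
  qed
  show ?thesis
    unfolding linear_code_def
  proof (intro conjI)
    show "?C \<subseteq> vecs n" by auto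
    show "(\<lambda>_. 0) \<in> ?C" by (simp add: vecs_def)
    show "\<forall>u\<in>?C. \<forall>v\<in>?C. (\<lambda>i. u i + v i) \<in> ?C"
      by (auto simp: vecs_def algebra_simps sum.distrib)
    show "\<forall>c. \<forall>v\<in>?C. (\<lambda>i. c * v i) \<in> ?C"
    proof (intro allI ballI)
      fix c v assume v: "v \<in> ?C"
      have "(\<Sum>j<n. H row j * (c * v j)) = c * (\<Sum>j<n. H row j * v j)" for row
        by (simp add: sum_distrib_left mult_ac)
      then show "(\<lambda>i. c * v i) \<in> ?C" using v by (auto simp: vecs_def)
    qed
    show "\<exists>b. (\<forall>t<n - N. b t \<in> ?C) \<and> (\<forall>c. (\<forall>i. (\<Sum>t<n - N. c t * b t i) = 0) \<longrightarrow> (\<forall>t<n - N. c t = 0)) \<and>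
        (\<forall>v\<in>?C. \<exists>c. \<forall>i. v i = (\<Sum>t<n - N. c t * b t i))"
    proof (intro exI[of _ b] conjI)
      show "\<forall>t<n - N. b t \<in> ?C" using bC by blast
      show "\<forall>c. (\<forall>i. (\<Sum>t<n - N. c t * b t i) = 0) \<longrightarrow> (\<forall>t<n - N. c t = 0)"
      proof (rule allI, rule impI, rule allI, rule impI)
        fix c t0 assume h: "\<forall>i. (\<Sum>t<n - N. c t * b t i) = 0" and t0: "t0 < n - N"
        have "(\<Sum>t<n - N. c t * b t (e t0)) = (\<Sum>t<n - N. c t * (if t = t0 then 1 else 0))"
          using bee t0 by (intro sum.cong refl) auto
        also have "\<dots> = c t0" using t0 by (simp add: sum_delta_mult2)
        finally show "c t0 = 0" using h by simp
      qed
      show "\<forall>v\<in>?C. \<exists>c. \<forall>i. v i = (\<Sum>t<n - N. c t * b t i)"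
      proof
        fix v assume v: "v \<in> ?C"
        define c where "c t = v (e t)" for t
        define w where "w j = v j - (\<Sum>t<n - N. c t * b t j)" for j
        have sumat: "(\<Sum>t<n - N. c t * b t (e t0)) = c t0" if "t0 < n - N" for t0
        proof -
          have "(\<Sum>t<n - N. c t * b t (e t0)) = (\<Sum>t<n - N. c t * (if t = t0 then 1 else 0))"
            using bee that by (intro sum.cong refl) auto
          also have "\<dots> = c t0" using that by (simp add: sum_delta_mult2)
          finally show ?thesis .
        qed
        have wout: "w j = 0" if "j \<notin> S0" for j
        proof (cases "j < n")
          case True
          then have "j \<in> F0" using that F0_def by auto
          then obtain t0 where t0: "t0 < n - N" "j = e t0" using esurj by blast
          then show ?thesis unfolding w_def using sumat[OF t0(1)] c_def by simp
        next
          case False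
          have "v j = 0" using v False unfolding vecs_def by auto
          moreover have "b t j = 0" if "t < n - N" for t
            using eF[OF that] False \<open>j \<notin> S0\<close> unfolding b_def F0_def by auto
          ultimately show ?thesis unfolding w_def by simp
        qed
        have "\<forall>row<N. (\<Sum>j\<in>S0. w j * H row j) = 0"
        proof (intro allI impI)
          fix row assume row: "row < N"
          have "(\<Sum>j\<in>S0. w j * H row j) = (\<Sum>j<n. H row j * w j)"
            by (rule sum.mono_neutral_cong_left) (use S0 wout in \<open>auto simp: mult.commute\<close>)
          also have "\<dots> = (\<Sum>j<n. H row j * v j) - (\<Sum>t<n - N. c t * (\<Sum>j<n. H row j * b t j))"
            unfolding w_def by (simp add: algebra_simps sum_subtractf sum_distrib_left sum.swap[of _ "{..<n}"])
          also have "\<dots> = 0" using v row bC by simp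
          finally show "(\<Sum>j\<in>S0. w j * H row j) = 0" .
        qed
        then have "\<forall>j\<in>S0. w j = 0" by (rule ciD)
        then have "\<forall>i. w i = 0" using wout by blast
        then show "\<exists>c. \<forall>i. v i = (\<Sum>t<n - N. c t * b t i)" unfolding w_def by (intro exI[of _ c]) simp
      qed
    qed
  qed
qed


lemma MR_cols:
  fixes K E :: "'l::field set" and \<theta> \<mu> lam \<omega> :: "nat \<Rightarrow> 'l"
  assumes r0: "0 < r" and K: "subfld K" and E: "subfld E" and KE: "K \<subseteq> E"
    and \<theta>K: "\<forall>j<r. \<theta> j \<in> K" and \<theta>inj: "inj_on \<theta> {..<r}"
    and \<mu>E: "\<forall>t<m. \<mu> t \<in> E" and \<mu>i: "indep K \<mu> m"
    and lamE: "\<forall>i<g. lam i \<in> E" and laminj: "inj_on lam {..<g}"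
    and \<omega>i: "indep E \<omega> \<nu>" and \<nu>: "\<nu> = min h g"
    and mbig: "min r (a + h) \<le> m"
    and Kdef: "K = {x. x ^ q = x}" and q0: "0 < q"
    and frob: "\<And>(f :: nat \<Rightarrow> 'l) (A :: nat set). (sum f A) ^ q = (\<Sum>i\<in>A. f i ^ q)"
    and a0: "0 < a"
    and S: "S \<subseteq> {..<g*r}" and cS: "card S = g * a + h" and grpS: "\<forall>i<g. a \<le> card {j\<in>S. j div r = i}"
  shows "cols_indep (g * a + h) (lrc_H g r h a (\<lambda>i s j. \<theta> j ^ s) (\<lambda>i s j. (alv lam \<omega> \<nu> i * piv \<theta> \<mu> m j) ^ (q ^ s))) S"
  unfolding cols_indep_def
proof (rule allI, rule impI)
  fix c
  let ?H = "lrc_H g r h a (\<lambda>i s j. \<theta> j ^ s) (\<lambda>i s j. (alv lam \<omega> \<nu> i * piv \<theta> \<mu> m j) ^ (q ^ s))"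
  assume rows: "\<forall>row<g * a + h. (\<Sum>j\<in>S. c j * ?H row j) = 0"
  have fS: "finite S" using S finite_subset by blast
  have A: "Aok r g a \<theta> S c"
    unfolding Aok_def
  proof (intro allI impI)
    fix i s assume i: "i < g" and s: "s < a"
    define row where "row = i * a + s"
    have "row < (i + 1) * a" unfolding row_def using s by simp
    also have "\<dots> \<le> g * a" using i by (intro mult_right_mono) auto
    finally have rl: "row < g * a" .
    have rd: "row div a = i" and rm: "row mod a = s" unfolding row_def using s by auto
    have "(\<Sum>j\<in>S. c j * ?H row j) = 0" using rows rl by simp
    moreover have "(\<Sum>j\<in>S. c j * ?H row j) = (\<Sum>j\<in>S. if j div r = i then c j * \<theta> (j mod r) ^ s else 0)"
      unfolding lrc_H_def using rl rd rm by (intro sum.cong refl) auto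
    moreover have "(\<Sum>j\<in>S. if j div r = i then c j * \<theta> (j mod r) ^ s else 0) = (\<Sum>k\<in>grp r S i. c k * \<theta> (k mod r) ^ s)"
      unfolding grp_def by (rule sum.inter_filter[symmetric, OF fS])
    ultimately show "(\<Sum>k\<in>grp r S i. c k * \<theta> (k mod r) ^ s) = 0" by simp
  qed
  have eqs: "\<forall>s<h. (\<Sum>k\<in>S. c k * gam r \<theta> \<mu> m lam \<omega> \<nu> k ^ (q ^ (0 + s))) = 0"
  proof (intro allI impI)
    fix s assume s: "s < h"
    have "(\<Sum>j\<in>S. c j * ?H (g * a + s) j) = 0" using rows s by simp
    moreover have "?H (g * a + s) j = gam r \<theta> \<mu> m lam \<omega> \<nu> j ^ (q ^ (0 + s))" for j
      unfolding lrc_H_def gam_def by simp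
    ultimately show "(\<Sum>k\<in>S. c k * gam r \<theta> \<mu> m lam \<omega> \<nu> k ^ (q ^ (0 + s))) = 0" by simp
  qed
  have "card S = (\<Sum>i<g. card (grp r S i))"
  proof -
    have "card S = (\<Sum>k\<in>S. (1::nat))" by simp
    also have "\<dots> = (\<Sum>i<g. \<Sum>k\<in>grp r S i. 1)" by (rule sum_grp[OF fS S])
    also have "\<dots> = (\<Sum>i<g. card (grp r S i))" by simp
    finally show ?thesis .
  qed
  moreover have "meas r g a S = (\<Sum>i<g. card (grp r S i)) - (\<Sum>i<g. a)"
    unfolding meas_def using grpS by (intro sum_subtractf_nat) (auto simp: grp_def)
  ultimately have mS: "meas r g a S = h" using cS by simp
  have "\<forall>k\<in>S. c k = 0"
    by (rule lemM[OF r0 K E KE \<theta>K \<theta>inj \<mu>E \<mu>i lamE laminj \<omega>i \<nu> mbig Kdef q0 frob S _ _ A eqs])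
       (use mS in auto)
  then show "\<forall>j\<in>S. c j = 0" .
qed


theorem theorem3p7:
  fixes r g a h m n q :: nat
    and Fq :: "'q::{finite,field} itself"
    and Fl :: "'l::{finite,field} itself"
  assumes pos: "0 < r" "0 < g" "0 < a" "0 < h" "0 < m"
    and a_le: "a \<le> r"
    and ga_h: "g * a + h < g * r"
    and n_def: "n = r * g"
    and q_pp: "\<exists>p k. prime p \<and> 0 < k \<and> q = p ^ k"
    and card_q: "CARD('q) = q"
    and q_ge: "q \<ge> r"
    and qm: "real (q ^ m) \<ge> real (m * n) / real r"
    and mds: "\<exists>C :: (nat \<Rightarrow> 'q) set. linear_code r (r - a) C \<and> min_dist r C (a + 1)"
    and cases: "m \<ge> r \<or>
       (m < r \<and> (\<exists>C :: (nat \<Rightarrow> 'q) set. linear_code r (r - m) C \<and> min_dist_ge r C (h + a + 1)))"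
    and card_l: "CARD('l) = q ^ (min (h * m) (n * m div r))"
  shows "\<exists>C :: (nat \<Rightarrow> 'l) set. MR_LRC n r h a C"
proof -
  have r0: "0 < r" and g0: "0 < g" and a0: "0 < a" and h0: "0 < h" and m0: "0 < m" using pos by auto
  have ngr: "n = g * r" using n_def by simp
  have gdiv: "n div r = g" using n_def r0 by simp
  have nmr: "n * m div r = g * m" using n_def r0 by simp
  define \<nu> where "\<nu> = min h g"
  have \<nu>0: "0 < \<nu>" using h0 g0 \<nu>_def by simp
  have "min (h * m) (g * m) = m * \<nu>" unfolding \<nu>_def by (cases "h \<le> g") (auto simp: min_def)
  then have cardl: "CARD('l) = q ^ (m * \<nu>)" using card_l nmr by simp
  obtain p e where p: "prime p" and e0: "0 < e" and qpe: "q = p ^ e" using q_pp by blast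
  have "CARD('l) = p ^ (e * (m * \<nu>))" using cardl qpe by (simp add: power_mult)
  moreover have "0 < e * (m * \<nu>)" using e0 m0 \<nu>0 by simp
  ultimately have charp: "CHAR('l) = p" by (rule ff_char[OF p])
  have pr: "prime CHAR('l)" using charp p by simp
  have qc: "q = CHAR('l) ^ e" using qpe charp by simp
  have q0: "0 < q" using qpe p prime_gt_0_nat by simp
  define K where "K = {x::'l. x ^ q = x}"
  define E where "E = {x::'l. x ^ (q ^ m) = x}"
  have K: "subfld K" unfolding K_def by (rule sf_subfld[OF pr qc])
  have qmc: "q ^ m = CHAR('l) ^ (e * m)" using qc by (simp add: power_mult)
  have E: "subfld E" unfolding E_def by (rule sf_subfld[OF pr qmc])
  have cK: "card K = q" unfolding K_def by (rule card_sf[OF pr qc e0 cardl]) (use m0 \<nu>0 in simp)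
  have cl2: "CARD('l) = (q ^ m) ^ \<nu>" using cardl by (simp add: power_mult)
  have cE: "card E = q ^ m" unfolding E_def
    by (rule card_sf[OF pr qmc _ cl2 \<nu>0]) (use e0 m0 in simp)
  have KE: "K \<subseteq> E" unfolding K_def E_def using K_pow by blast
  have frob: "\<And>(f :: nat \<Rightarrow> 'l) (A :: nat set). (sum f A) ^ q = (\<Sum>i\<in>A. f i ^ q)"
    by (rule frob_sum[OF pr qc])
  have mbig: "min r (a + h) \<le> m"
    using cases
  proof
    assume "r \<le> m" then show ?thesis by simp
  next
    assume "m < r \<and> (\<exists>C :: (nat \<Rightarrow> 'q) set. linear_code r (r - m) C \<and> min_dist_ge r C (h + a + 1))"
    then obtain C :: "(nat \<Rightarrow> 'q) set" where mr: "m < r" and lc: "linear_code r (r - m) C"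
      and md: "min_dist_ge r C (h + a + 1)" by blast
    have "h + a + 1 \<le> r - (r - m) + 1" by (rule singleton[OF lc md]) (use mr in auto)
    then show ?thesis using mr by simp
  qed
  have fK: "finite K" and fE: "finite E" by auto
  obtain \<theta> where \<theta>inj: "inj_on \<theta> {..<r}" and \<theta>K: "\<forall>j<r. \<theta> j \<in> K"
  proof -
    obtain \<Theta> where \<Theta>: "\<Theta> \<subseteq> K" "card \<Theta> = r" "finite \<Theta>"
      using obtain_subset_with_card_n[of r K] cK q_ge by auto
    obtain f where "bij_betw f {0..<card \<Theta>} \<Theta>" using ex_bij_betw_nat_finite[OF \<Theta>(3)] by blast
    then have "bij_betw f {..<r} \<Theta>" using \<Theta>(2) by (simp add: atLeast0LessThan)
    then show ?thesis using that \<Theta>(1) by (auto simp: bij_betw_def)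
  qed
  have gq: "g \<le> q ^ m"
  proof -
    have "real (m * n) / real r = real (m * g)" using n_def r0 by simp
    then have "m * g \<le> q ^ m" using qm by linarith
    moreover have "g \<le> m * g" using m0 by simp
    ultimately show ?thesis by linarith
  qed
  obtain lam where laminj: "inj_on lam {..<g}" and lamE: "\<forall>i<g. lam i \<in> E"
  proof -
    obtain \<Lambda> where \<Lambda>: "\<Lambda> \<subseteq> E" "card \<Lambda> = g" "finite \<Lambda>"
      using obtain_subset_with_card_n[of g E] cE gq by auto
    obtain f where "bij_betw f {0..<card \<Lambda>} \<Lambda>" using ex_bij_betw_nat_finite[OF \<Lambda>(3)] by blast
    then have "bij_betw f {..<g} \<Lambda>" using \<Lambda>(2) by (simp add: atLeast0LessThan)
    then show ?thesis using that \<Lambda>(1) by (auto simp: bij_betw_def)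
  qed
  obtain \<mu> where \<mu>E: "\<forall>t<m. \<mu> t \<in> E" and \<mu>i: "indep K \<mu> m"
    using greedy[OF K fK fE, of m] cK cE by auto
  have fU: "finite (UNIV :: 'l set)" by simp
  obtain \<omega> where \<omega>i: "indep E \<omega> \<nu>"
    using greedy[OF E fE fU, of \<nu>] cE cardl by (auto simp: power_mult)
  define A :: "nat \<Rightarrow> nat \<Rightarrow> nat \<Rightarrow> 'l" where "A = (\<lambda>i s j. \<theta> j ^ s)"
  define D :: "nat \<Rightarrow> nat \<Rightarrow> nat \<Rightarrow> 'l" where "D = (\<lambda>i s j. (alv lam \<omega> \<nu> i * piv \<theta> \<mu> m j) ^ (q ^ s))"
  have MR: "cols_indep (g * a + h) (lrc_H g r h a A D) S"
    if "S \<subseteq> {..<n}" "card S = g * a + h" "\<forall>i<g. a \<le> card {j\<in>S. j div r = i}" for S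
    unfolding A_def D_def
    by (rule MR_cols[OF r0 K E KE \<theta>K \<theta>inj \<mu>E \<mu>i lamE laminj \<omega>i \<nu>_def mbig K_def q0 frob a0])
       (use that ngr in auto)
  obtain S0 where S0: "S0 \<subseteq> {..<g*r}" "card S0 = g * a + h" "\<forall>i<g. a \<le> card {j\<in>S0. j div r = i}"
    using exS0[OF r0 a_le ga_h] by blast
  define C where "C = {v \<in> vecs n. \<forall>row<g * a + h. (\<Sum>j<n. lrc_H g r h a A D row j * v j) = 0}"
  have lc: "linear_code n (n - (g * a + h)) C"
    unfolding C_def by (rule null_code) (use S0 MR ngr in auto)
  have rs: "linear_code r a (row_space a r (A i)) \<and> min_dist r (row_space a r (A i)) (r - a + 1)" for i
    unfolding A_def by (rule rs_code[OF \<theta>inj a0 a_le])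
  have "MR_LRC n r h a C"
    unfolding MR_LRC_def Let_def gdiv
  proof (intro conjI)
    show "0 < r" "0 < a" "0 < h" "0 < g" "g * a + h < g * r" using pos ga_h by auto
    show "r dvd n" using n_def by simp
    show "linear_code n (n - g * a - h) C" using lc by (simp add: diff_diff_left)
    show "\<exists>A D. C = {v \<in> vecs n. \<forall>row<g * a + h. (\<Sum>j<n. lrc_H g r h a A D row j * v j) = 0} \<and>
        (\<forall>i<g. linear_code r a (row_space a r (A i)) \<and> min_dist r (row_space a r (A i)) (r - a + 1)) \<and>
        (\<forall>S. S \<subseteq> {..<n} \<and> card S = g * a + h \<and> (\<forall>i<g. a \<le> card {j \<in> S. j div r = i}) \<longrightarrow>
             cols_indep (g * a + h) (lrc_H g r h a A D) S)"
      by (intro exI[of _ A] exI[of _ D] conjI) (use C_def rs MR in auto)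
  qed
  then show ?thesis by blast
qed

end
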